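(* Let $U\subset\mathbb{R}^n$ be a bounded domain with smooth boundary and let $(u_1,u_2)\in C(\overline U)^2$ be a viscosity solution of the system (S) in $U$. Then for every $x_0\in U$ and $i\in\{1,2\}$ the limit $S_i^+(x_0):=\lim_{r\to0^+}S_i^+(x_0,r)$ exists in $\mathbb{R}$.
   Context: For $\varphi\in C^2$ near $x$, set $\Delta_\infty\varphi(x)=|D\varphi(x)|^{-2}\sum_{k,l=1}^n\varphi_{x_k}\varphi_{x_l}\varphi_{x_kx_l}(x)$ when $D\varphi(x)\neq0$. Define $\Delta_\infty^+\varphi(x)=\Delta_\infty\varphi(x)$ if $D\varphi(x)\ne0$ and $\Delta_\infty^+\varphi(x)=\max\{D^2\varphi(x)v\cdot v: v\in\mathbb{S}^{n-1}\}$ if $D\varphi(x)=0$; define $\Delta_\infty^-\varphi(x)$ in the same way with $\min$ in place of $\max$. The system (S) on an open set $\Omega$ is: $-\Delta_\infty u_1+u_1-u_2=0$ and $-\Delta_\infty u_2+u_2-u_1=0$ in $\Omega$. A pair $(u_1,u_2)$ of upper semicontinuous functions on $\Omega$ is a viscosity subsolution of (S) in $\Omega$ if for each $i\in\{1,2\}$, $j=3-i$, and each $\varphi\in C^2(\Omega)$ such that $u_i-\varphi$ has a local maximum at $x_0\in\Omega$, one has $-\Delta_\infty^+\varphi(x_0)+u_i(x_0)-u_j(x_0)\le0$. A pair of lower semicontinuous functions on $\Omega$ is a viscosity supersolution if for each $i$, $j=3-i$, and each $\varphi\in C^2(\Omega)$ such that $u_i-\varphi$ has a local minimum at $x_0\in\Omega$,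 one has $-\Delta_\infty^-\varphi(x_0)+u_i(x_0)-u_j(x_0)\ge0$. A viscosity solution is a pair that is both a subsolution and a supersolution. For $x_0\in U$, $r>0$ with $\overline B(x_0,r)\subset U$: $S_i^+(x_0,r)=\frac{\max_{|y-x_0|=r}u_i(y)-u_i(x_0)}{r}$. *)

theory Defs
  imports "HOL-Analysis.Analysis"
begin

definition usc_on :: "'a::metric_space set \<Rightarrow> ('a \<Rightarrow> real) \<Rightarrow> bool" where
  "usc_on S u \<longleftrightarrow> (\<forall>x\<in>S. \<forall>c. u x < c \<longrightarrow> (\<exists>e>0. \<forall>y\<in>S. dist y x < e \<longrightarrow> u y < c))"

definition lsc_on :: "'a::metric_space set \<Rightarrow> ('a \<Rightarrow> real) \<Rightarrow> bool" where
  "lsc_on S u \<longleftrightarrow> (\<forall>x\<in>S. \<forall>c. c < u x \<longrightarrow> (\<exists>e>0. \<forall>y\<in>S. dist y x < e \<longrightarrow> c < u y))"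

definition C2_with :: "'a::euclidean_space set \<Rightarrow> ('a \<Rightarrow> real) \<Rightarrow> ('a \<Rightarrow> ('a \<Rightarrow>\<^sub>L real))
    \<Rightarrow> ('a \<Rightarrow> ('a \<Rightarrow>\<^sub>L ('a \<Rightarrow>\<^sub>L real))) \<Rightarrow> bool" where
  "C2_with Om phi Df D2 \<longleftrightarrow>
     (\<forall>x\<in>Om. (phi has_derivative blinfun_apply (Df x)) (at x)) \<and>
     (\<forall>x\<in>Om. (Df has_derivative blinfun_apply (D2 x)) (at x)) \<and>
     continuous_on Om D2"

definition grad_of :: "('a::euclidean_space \<Rightarrow>\<^sub>L real) \<Rightarrow> 'a" where
  "grad_of L = (\<Sum>b\<in>Basis. blinfun_apply L b *\<^sub>R b)"

definition hess_form :: "('a::euclidean_space \<Rightarrow>\<^sub>L ('a \<Rightarrow>\<^sub>L real)) \<Rightarrow> 'a \<Rightarrow> real" where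
  "hess_form H v = blinfun_apply (blinfun_apply H v) v"

definition inf_lap :: "('a::euclidean_space \<Rightarrow>\<^sub>L real) \<Rightarrow> ('a \<Rightarrow>\<^sub>L ('a \<Rightarrow>\<^sub>L real)) \<Rightarrow> real" where
  "inf_lap L H = hess_form H (grad_of L) / (norm (grad_of L))\<^sup>2"

definition inf_lap_plus :: "('a::euclidean_space \<Rightarrow>\<^sub>L real) \<Rightarrow> ('a \<Rightarrow>\<^sub>L ('a \<Rightarrow>\<^sub>L real)) \<Rightarrow> real" where
  "inf_lap_plus L H = (if grad_of L \<noteq> 0 then inf_lap L H
                       else Sup {hess_form H v | v. norm v = 1})"

definition inf_lap_minus :: "('a::euclidean_space \<Rightarrow>\<^sub>L real) \<Rightarrow> ('a \<Rightarrow>\<^sub>L ('a \<Rightarrow>\<^sub>L real)) \<Rightarrow> real" where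
  "inf_lap_minus L H = (if grad_of L \<noteq> 0 then inf_lap L H
                       else Inf {hess_form H v | v. norm v = 1})"

definition local_max_on :: "'a::metric_space set \<Rightarrow> ('a \<Rightarrow> real) \<Rightarrow> 'a \<Rightarrow> bool" where
  "local_max_on Om f x0 \<longleftrightarrow> (\<exists>e>0. \<forall>y\<in>Om. dist y x0 < e \<longrightarrow> f y \<le> f x0)"

definition local_min_on :: "'a::metric_space set \<Rightarrow> ('a \<Rightarrow> real) \<Rightarrow> 'a \<Rightarrow> bool" where
  "local_min_on Om f x0 \<longleftrightarrow> (\<exists>e>0. \<forall>y\<in>Om. dist y x0 < e \<longrightarrow> f x0 \<le> f y)"

definition visc_sub_comp :: "'a::euclidean_space set \<Rightarrow> ('a \<Rightarrow> real) \<Rightarrow> ('a \<Rightarrow> real) \<Rightarrow> bool" where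
  "visc_sub_comp Om ui uj \<longleftrightarrow>
     (\<forall>phi Df D2 x0. C2_with Om phi Df D2 \<longrightarrow> x0 \<in> Om \<longrightarrow> local_max_on Om (\<lambda>x. ui x - phi x) x0 \<longrightarrow>
        - inf_lap_plus (Df x0) (D2 x0) + ui x0 - uj x0 \<le> 0)"

definition visc_super_comp :: "'a::euclidean_space set \<Rightarrow> ('a \<Rightarrow> real) \<Rightarrow> ('a \<Rightarrow> real) \<Rightarrow> bool" where
  "visc_super_comp Om ui uj \<longleftrightarrow>
     (\<forall>phi Df D2 x0. C2_with Om phi Df D2 \<longrightarrow> x0 \<in> Om \<longrightarrow> local_min_on Om (\<lambda>x. ui x - phi x) x0 \<longrightarrow>
        - inf_lap_minus (Df x0) (D2 x0) + ui x0 - uj x0 \<ge> 0)"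

definition visc_subsol_S :: "'a::euclidean_space set \<Rightarrow> ('a \<Rightarrow> real) \<Rightarrow> ('a \<Rightarrow> real) \<Rightarrow> bool" where
  "visc_subsol_S Om u1 u2 \<longleftrightarrow> usc_on Om u1 \<and> usc_on Om u2 \<and>
     visc_sub_comp Om u1 u2 \<and> visc_sub_comp Om u2 u1"

definition visc_supersol_S :: "'a::euclidean_space set \<Rightarrow> ('a \<Rightarrow> real) \<Rightarrow> ('a \<Rightarrow> real) \<Rightarrow> bool" where
  "visc_supersol_S Om u1 u2 \<longleftrightarrow> lsc_on Om u1 \<and> lsc_on Om u2 \<and>
     visc_super_comp Om u1 u2 \<and> visc_super_comp Om u2 u1"

definition visc_sol_S :: "'a::euclidean_space set \<Rightarrow> ('a \<Rightarrow> real) \<Rightarrow> ('a \<Rightarrow> real) \<Rightarrow> bool" where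
  "visc_sol_S Om u1 u2 \<longleftrightarrow> visc_subsol_S Om u1 u2 \<and> visc_supersol_S Om u1 u2"

definition pderiv_dir :: "'a::euclidean_space \<Rightarrow> ('a \<Rightarrow> real) \<Rightarrow> ('a \<Rightarrow> real)" where
  "pderiv_dir b f = (\<lambda>x. frechet_derivative f (at x) b)"

definition iter_pderiv :: "'a::euclidean_space list \<Rightarrow> ('a \<Rightarrow> real) \<Rightarrow> ('a \<Rightarrow> real)" where
  "iter_pderiv bs f = foldr pderiv_dir bs f"

definition smooth_on :: "'a::euclidean_space set \<Rightarrow> ('a \<Rightarrow> real) \<Rightarrow> bool" where
  "smooth_on S f \<longleftrightarrow> (\<forall>bs\<in>lists Basis.
      (\<forall>x\<in>S. iter_pderiv bs f differentiable (at x)) \<and> continuous_on S (iter_pderiv bs f))"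

definition smooth_boundary :: "'a::euclidean_space set \<Rightarrow> bool" where
  "smooth_boundary U \<longleftrightarrow> (\<forall>p\<in>frontier U. \<exists>V rho. open V \<and> p \<in> V \<and> smooth_on V rho \<and>
      (\<forall>x\<in>V. frechet_derivative rho (at x) \<noteq> (\<lambda>_. 0)) \<and>
      U \<inter> V = {x\<in>V. rho x < 0})"

definition S_plus :: "('a::euclidean_space \<Rightarrow> real) \<Rightarrow> 'a \<Rightarrow> real \<Rightarrow> real" where
  "S_plus u x0 r = (Sup (u ` sphere x0 r) - u x0) / r"

end

theory Submission
  imports Defs
begin

lemma q_deriv: "((\<lambda>x::'a::euclidean_space. (x-x0)\<bullet>(x-x0)) has_derivative (\<lambda>h. 2 * ((x-x0)\<bullet>h))) (at x)"
  by (rule derivative_eq_intros refl | simp add: inner_commute)+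

lemma C2_radial:
  fixes x0 :: "'a::euclidean_space" and G G1 G2 :: "real \<Rightarrow> real"
  assumes dG: "\<And>t. t \<ge> 0 \<Longrightarrow> (G has_real_derivative G1 t) (at t)"
    and dG1: "\<And>t. t \<ge> 0 \<Longrightarrow> (G1 has_real_derivative G2 t) (at t)"
    and cG2: "\<And>t. t \<ge> 0 \<Longrightarrow> isCont G2 t"
  shows "C2_with Om (\<lambda>x. G ((x-x0)\<bullet>(x-x0)))
     (\<lambda>x. (2*G1((x-x0)\<bullet>(x-x0))) *\<^sub>R blinfun_inner_right (x-x0))
     (\<lambda>x. (4*G2((x-x0)\<bullet>(x-x0))) *\<^sub>R (blinfun_scaleR_left (blinfun_inner_right (x-x0)) o\<^sub>L blinfun_inner_right (x-x0))
          + (2*G1((x-x0)\<bullet>(x-x0))) *\<^sub>R Blinfun blinfun_inner_right)"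
proof -
  let ?q = "\<lambda>x::'a. (x-x0)\<bullet>(x-x0)"
  have qnn: "?q x \<ge> 0" for x by simp
  have qc: "isCont ?q x" for x by (intro continuous_intros)
  have BA: "blinfun_apply (Blinfun blinfun_inner_right) = (blinfun_inner_right :: 'a \<Rightarrow> _)"
    by (rule bounded_linear_Blinfun_apply[OF bounded_linear_blinfun_inner_right])
  have 1: "((\<lambda>x. G (?q x)) has_derivative blinfun_apply ((2*G1(?q x)) *\<^sub>R blinfun_inner_right (x-x0))) (at x)" for x
  proof -
    have "((\<lambda>x. G (?q x)) has_derivative (\<lambda>h. 2 * ((x-x0)\<bullet>h) * G1 (?q x))) (at x)"
      by (rule DERIV_compose_FDERIV[OF dG[OF qnn] q_deriv])
    moreover have "blinfun_apply ((2*G1(?q x)) *\<^sub>R blinfun_inner_right (x-x0)) = (\<lambda>h. 2 * ((x-x0)\<bullet>h) * G1 (?q x))"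
      by (simp add: fun_eq_iff blinfun.bilinear_simps)
    ultimately show ?thesis by simp
  qed
  have 2: "((\<lambda>x. (2*G1(?q x)) *\<^sub>R blinfun_inner_right (x-x0)) has_derivative
      blinfun_apply ((4*G2(?q x)) *\<^sub>R (blinfun_scaleR_left (blinfun_inner_right (x-x0)) o\<^sub>L blinfun_inner_right (x-x0))
          + (2*G1(?q x)) *\<^sub>R Blinfun blinfun_inner_right)) (at x)" for x
  proof -
    have g1: "((\<lambda>x. 2 * G1 (?q x)) has_derivative (\<lambda>h. 2 * (2 * ((x-x0)\<bullet>h) * G2 (?q x)))) (at x)"
      using DERIV_compose_FDERIV[OF dG1[OF qnn] q_deriv]
      by (intro derivative_eq_intros) auto
    have g2: "((\<lambda>x. blinfun_inner_right (x-x0)) has_derivative (\<lambda>h. blinfun_inner_right h)) (at x)"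
      by (rule derivative_eq_intros refl | simp)+
    have "((\<lambda>x. (2*G1(?q x)) *\<^sub>R blinfun_inner_right (x-x0)) has_derivative
       (\<lambda>h. (2*G1(?q x)) *\<^sub>R blinfun_inner_right h + (2 * (2 * ((x-x0)\<bullet>h) * G2 (?q x))) *\<^sub>R blinfun_inner_right (x-x0))) (at x)"
      by (rule has_derivative_scaleR[OF g1 g2])
    moreover have "blinfun_apply ((4*G2(?q x)) *\<^sub>R (blinfun_scaleR_left (blinfun_inner_right (x-x0)) o\<^sub>L blinfun_inner_right (x-x0))
          + (2*G1(?q x)) *\<^sub>R Blinfun blinfun_inner_right) = 
       (\<lambda>h. (2*G1(?q x)) *\<^sub>R blinfun_inner_right h + (2 * (2 * ((x-x0)\<bullet>h) * G2 (?q x))) *\<^sub>R blinfun_inner_right (x-x0))"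
      by (rule ext, rule blinfun_eqI) (simp add: BA algebra_simps blinfun.bilinear_simps)
    ultimately show ?thesis by simp
  qed
  have 3: "continuous_on Om (\<lambda>x. (4*G2(?q x)) *\<^sub>R (blinfun_scaleR_left (blinfun_inner_right (x-x0)) o\<^sub>L blinfun_inner_right (x-x0))
          + (2*G1(?q x)) *\<^sub>R Blinfun blinfun_inner_right)"
  proof (rule continuous_at_imp_continuous_on, intro ballI)
    fix x
    have c2: "isCont (\<lambda>x. G2 (?q x)) x" by (rule isCont_o2[OF qc cG2[OF qnn]])
    have c1: "isCont (\<lambda>x. G1 (?q x)) x" by (rule isCont_o2[OF qc DERIV_isCont[OF dG1[OF qnn]]])
    show "isCont (\<lambda>x. (4*G2(?q x)) *\<^sub>R (blinfun_scaleR_left (blinfun_inner_right (x-x0)) o\<^sub>L blinfun_inner_right (x-x0))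
          + (2*G1(?q x)) *\<^sub>R Blinfun blinfun_inner_right) x"
      using c1 c2 by (intro continuous_intros) 
  qed
  show ?thesis unfolding C2_with_def using 1 2 3 by blast
qed


lemma grad_of_radial: "grad_of (c *\<^sub>R blinfun_inner_right (d::'a::euclidean_space)) = c *\<^sub>R d"
proof -
  have "grad_of (c *\<^sub>R blinfun_inner_right d) = c *\<^sub>R (\<Sum>b\<in>Basis. (d \<bullet> b) *\<^sub>R b)"
    unfolding grad_of_def by (simp add: blinfun.bilinear_simps scaleR_sum_right)
  then show ?thesis by (simp add: euclidean_representation)
qed

lemma hess_radial:
  fixes d w :: "'a::euclidean_space"
  shows "hess_form (A *\<^sub>R (blinfun_scaleR_left (blinfun_inner_right d) o\<^sub>L blinfun_inner_right d)
          + B *\<^sub>R Blinfun blinfun_inner_right) w = A * (d \<bullet> w) * (d \<bullet> w) + B * (w \<bullet> w)"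
proof -
  have BA: "blinfun_apply (Blinfun blinfun_inner_right) = (blinfun_inner_right :: 'a \<Rightarrow> _)"
    by (rule bounded_linear_Blinfun_apply[OF bounded_linear_blinfun_inner_right])
  show ?thesis unfolding hess_form_def by (simp add: BA blinfun.bilinear_simps algebra_simps)
qed

lemma inf_lap_radial:
  fixes d :: "'a::euclidean_space"
  assumes "d \<noteq> 0" "G1 \<noteq> 0"
  shows "inf_lap_plus ((2*G1) *\<^sub>R blinfun_inner_right d)
     ((4*G2) *\<^sub>R (blinfun_scaleR_left (blinfun_inner_right d) o\<^sub>L blinfun_inner_right d)
          + (2*G1) *\<^sub>R Blinfun blinfun_inner_right) = 4*G2*(d\<bullet>d) + 2*G1"
proof -
  have dd: "d \<bullet> d > 0" using assms by simp
  have g: "grad_of ((2*G1) *\<^sub>R blinfun_inner_right d) = (2*G1) *\<^sub>R d" by (rule grad_of_radial)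
  have gn: "(2*G1) *\<^sub>R d \<noteq> 0" using assms by simp
  have n2: "(norm ((2*G1) *\<^sub>R d))\<^sup>2 = 4*G1*G1*(d\<bullet>d)"
    by (simp only: power2_norm_eq_inner inner_scaleR_left inner_scaleR_right)
  show ?thesis unfolding inf_lap_plus_def inf_lap_def g using gn dd assms
    by (simp only: hess_radial if_True) (simp add: n2 field_simps power2_eq_square dot_square_norm)
qed

lemma inf_lap_radial0:
  fixes d :: "'a::euclidean_space"
  shows "inf_lap_plus ((2*G1) *\<^sub>R blinfun_inner_right 0)
     ((4*G2) *\<^sub>R (blinfun_scaleR_left (blinfun_inner_right (0::'a)) o\<^sub>L blinfun_inner_right 0)
          + (2*G1) *\<^sub>R Blinfun blinfun_inner_right) = 2*G1"
proof -
  have g: "grad_of ((2*G1) *\<^sub>R blinfun_inner_right (0::'a)) = 0" using grad_of_radial[of "2*G1" "0::'a"] by simp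
  obtain b :: 'a where b: "b \<in> Basis" by (meson ex_in_conv nonempty_Basis)
  have "{hess_form ((4*G2) *\<^sub>R (blinfun_scaleR_left (blinfun_inner_right (0::'a)) o\<^sub>L blinfun_inner_right 0)
          + (2*G1) *\<^sub>R Blinfun blinfun_inner_right) v |v::'a. norm v = 1} = {2*G1}"
  proof -
    have "\<And>v::'a. norm v = 1 \<Longrightarrow> v \<bullet> v = 1" by (simp add: dot_square_norm)
    moreover have "norm b = 1" using b by simp
    ultimately show ?thesis by (auto simp: hess_radial intro!: exI[of _ b])
  qed
  then show ?thesis unfolding inf_lap_plus_def g by simp
qed


definition Gf :: "real \<Rightarrow> real \<Rightarrow> real \<Rightarrow> real \<Rightarrow> real" where
  "Gf a c \<epsilon> t = a * sqrt(t+\<epsilon>) + c*t"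
definition G1f :: "real \<Rightarrow> real \<Rightarrow> real \<Rightarrow> real \<Rightarrow> real" where
  "G1f a c \<epsilon> t = a/(2* sqrt(t+\<epsilon>)) + c"
definition G2f :: "real \<Rightarrow> real \<Rightarrow> real \<Rightarrow> real \<Rightarrow> real" where
  "G2f a c \<epsilon> t = -a/(4*((t+\<epsilon>)* sqrt(t+\<epsilon>)))"

lemma G_derivs:
  assumes "\<epsilon> > 0" "t \<ge> 0"
  shows "(Gf a c \<epsilon> has_real_derivative G1f a c \<epsilon> t) (at t)"
    "(G1f a c \<epsilon> has_real_derivative G2f a c \<epsilon> t) (at t)"
    "isCont (G2f a c \<epsilon>) t"
proof -
  have p: "t + \<epsilon> > 0" using assms by simp
  show "(Gf a c \<epsilon> has_real_derivative G1f a c \<epsilon> t) (at t)"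
    unfolding Gf_def[abs_def] G1f_def using p
    by (auto intro!: derivative_eq_intros simp: field_simps)
  show "(G1f a c \<epsilon> has_real_derivative G2f a c \<epsilon> t) (at t)"
    unfolding G1f_def[abs_def] G2f_def using p
    by (auto intro!: derivative_eq_intros simp: field_simps power2_eq_square)
  show "isCont (G2f a c \<epsilon>) t"
    unfolding G2f_def[abs_def] using p
    by (auto intro!: continuous_intros)
qed

lemma sub_test:
  fixes x0 :: "'a::euclidean_space"
  assumes sub: "visc_sub_comp U u v" and eps: "\<epsilon> > 0" and yU: "y \<in> U"
    and lm: "local_max_on U (\<lambda>x. u x - Gf a c \<epsilon> ((x-x0)\<bullet>(x-x0))) y"
  shows "y \<noteq> x0 \<Longrightarrow> G1f a c \<epsilon> ((y-x0)\<bullet>(y-x0)) \<noteq> 0 \<Longrightarrow>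
     -(4*G2f a c \<epsilon> ((y-x0)\<bullet>(y-x0))*((y-x0)\<bullet>(y-x0)) + 2*G1f a c \<epsilon> ((y-x0)\<bullet>(y-x0))) + u y - v y \<le> 0"
    and "y = x0 \<Longrightarrow> -(2*G1f a c \<epsilon> 0) + u y - v y \<le> 0"
proof -
  have C2: "C2_with U (\<lambda>x. Gf a c \<epsilon> ((x-x0)\<bullet>(x-x0)))
     (\<lambda>x. (2*G1f a c \<epsilon>((x-x0)\<bullet>(x-x0))) *\<^sub>R blinfun_inner_right (x-x0))
     (\<lambda>x. (4*G2f a c \<epsilon>((x-x0)\<bullet>(x-x0))) *\<^sub>R (blinfun_scaleR_left (blinfun_inner_right (x-x0)) o\<^sub>L blinfun_inner_right (x-x0))
          + (2*G1f a c \<epsilon>((x-x0)\<bullet>(x-x0))) *\<^sub>R Blinfun blinfun_inner_right)"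
    by (rule C2_radial) (use G_derivs[OF eps] in auto)
  have main: "- inf_lap_plus ((2*G1f a c \<epsilon>((y-x0)\<bullet>(y-x0))) *\<^sub>R blinfun_inner_right (y-x0))
     ((4*G2f a c \<epsilon>((y-x0)\<bullet>(y-x0))) *\<^sub>R (blinfun_scaleR_left (blinfun_inner_right (y-x0)) o\<^sub>L blinfun_inner_right (y-x0))
          + (2*G1f a c \<epsilon>((y-x0)\<bullet>(y-x0))) *\<^sub>R Blinfun blinfun_inner_right) + u y - v y \<le> 0"
    using sub C2 yU lm unfolding visc_sub_comp_def by blast
  show "y \<noteq> x0 \<Longrightarrow> G1f a c \<epsilon> ((y-x0)\<bullet>(y-x0)) \<noteq> 0 \<Longrightarrow>
     -(4*G2f a c \<epsilon> ((y-x0)\<bullet>(y-x0))*((y-x0)\<bullet>(y-x0)) + 2*G1f a c \<epsilon> ((y-x0)\<bullet>(y-x0))) + u y - v y \<le> 0"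
    using main inf_lap_radial[of "y-x0" "G1f a c \<epsilon> ((y-x0)\<bullet>(y-x0))" "G2f a c \<epsilon> ((y-x0)\<bullet>(y-x0))"] by simp
  show "y = x0 \<Longrightarrow> -(2*G1f a c \<epsilon> 0) + u y - v y \<le> 0"
  proof -
    assume yx: "y = x0"
    then have "y - x0 = 0" "(y-x0)\<bullet>(y-x0) = 0" by auto
    then show ?thesis using main inf_lap_radial0[where 'a='a, of "G1f a c \<epsilon> 0" "G2f a c \<epsilon> 0"]
      by (simp only:)
  qed
qed


lemma local_max_from_ball:
  fixes x0 :: "'a::metric_space"
  assumes "y \<in> ball x0 r" "\<forall>z\<in>cball x0 r. f z \<le> f y"
  shows "local_max_on U f y"
  unfolding local_max_on_def
proof (intro exI[of _ "r - dist x0 y"] conjI ballI impI)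
  show "r - dist x0 y > 0" using assms(1) by simp
  fix z assume "z \<in> U" "dist z y < r - dist x0 y"
  then have "z \<in> cball x0 r" by (simp add: dist_commute) (metis dist_triangle2 less_diff_eq order.strict_implies_order order_le_less_trans dist_commute)
  then show "f z \<le> f y" using assms(2) by blast
qed

lemma q_dist: "(x-x0)\<bullet>(x-x0) = (dist x (x0::'a::euclidean_space))\<^sup>2"
  by (simp add: dist_norm power2_norm_eq_inner)

lemma sphere_facts:
  fixes x0 :: "'a::euclidean_space" and u :: "'a \<Rightarrow> real"
  assumes "continuous_on (cball x0 r) u" "r \<ge> 0"
  shows "sphere x0 r \<noteq> {}" "\<And>x. x \<in> sphere x0 r \<Longrightarrow> u x \<le> Sup (u ` sphere x0 r)"
    "\<And>B. (\<And>x. x \<in> sphere x0 r \<Longrightarrow> u x \<le> B) \<Longrightarrow> Sup (u ` sphere x0 r) \<le> B"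
proof -
  obtain b :: 'a where b: "b \<in> Basis" by (meson ex_in_conv nonempty_Basis)
  have "x0 + r *\<^sub>R b \<in> sphere x0 r" using b assms(2) by (simp add: dist_norm)
  then show ne: "sphere x0 r \<noteq> {}" by blast
  have "compact (u ` sphere x0 r)"
    by (rule compact_continuous_image[OF continuous_on_subset[OF assms(1)]]) auto
  then have bdd: "bdd_above (u ` sphere x0 r)" by (simp add: bounded_imp_bdd_above compact_imp_bounded)
  show "\<And>x. x \<in> sphere x0 r \<Longrightarrow> u x \<le> Sup (u ` sphere x0 r)"
    using bdd by (intro cSup_upper) auto
  show "\<And>B. (\<And>x. x \<in> sphere x0 r \<Longrightarrow> u x \<le> B) \<Longrightarrow> Sup (u ` sphere x0 r) \<le> B"
    using ne by (intro cSup_least) auto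
qed


lemma S_limit:
  fixes U :: "'a::euclidean_space set" and u v :: "'a \<Rightarrow> real"
  assumes oU: "open U" and bU: "bounded U"
    and cu: "continuous_on (closure U) u" and cv: "continuous_on (closure U) v"
    and sub: "visc_sub_comp U u v" and x0U: "x0 \<in> U"
  shows "\<exists>L. ((\<lambda>r. S_plus u x0 r) \<longlongrightarrow> L) (at_right 0)"
proof -
  obtain M where M0: "M \<ge> 0" and Mb: "\<And>y. y \<in> U \<Longrightarrow> v y - u y \<le> M"
  proof -
    have "compact ((\<lambda>y. v y - u y) ` closure U)"
      using bU cu cv by (intro compact_continuous_image continuous_intros) (auto simp: compact_closure)
    then obtain B where B: "\<forall>z\<in>(\<lambda>y. v y - u y) ` closure U. norm z \<le> B"
      by (meson bounded_iff compact_imp_bounded)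
    have "\<And>y. y \<in> U \<Longrightarrow> v y - u y \<le> max 0 B"
    proof -
      fix y assume "y \<in> U"
      then have "y \<in> closure U" using closure_subset by blast
      then have "norm (v y - u y) \<le> B" using B by blast
      then show "v y - u y \<le> max 0 B" by simp
    qed
    then show ?thesis using that[of "max 0 B"] by simp
  qed
  define N where "N = M + 1"
  have N0: "N > 0" using M0 by (simp add: N_def)
  obtain R where R0: "R > 0" and RU: "cball x0 R \<subseteq> U" using open_contains_cball oU x0U by blast
  have cuU: "continuous_on U u" using cu closure_subset continuous_on_subset by blast
  define m where "m r = Sup (u ` sphere x0 r)" for r
  have cbU: "cball x0 r \<subseteq> U" if "r \<le> R" for r using RU subset_cball[OF that] by blast
  have cub: "continuous_on (cball x0 r) u" if "r \<le> R" for r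
    using continuous_on_subset[OF cuU cbU[OF that]] .
  have mup: "u x \<le> m r" if "0 \<le> r" "r \<le> R" "x \<in> sphere x0 r" for x r
    unfolding m_def using sphere_facts(2)[OF cub[OF that(2)] that(1) that(3)] .
  have mle: "m r \<le> B" if "0 \<le> r" "r \<le> R" "\<And>x. x \<in> sphere x0 r \<Longrightarrow> u x \<le> B" for B r
    unfolding m_def using sphere_facts(3)[OF cub[OF that(2)] that(1)] that(3) by blast

  have lower: "u x0 - (N/2) * r^2 \<le> m r" if r0: "0 < r" and rR: "r \<le> R" for r
  proof (rule ccontr)
    assume "\<not> ?thesis"
    hence lt: "m r < u x0 - (N/2)*r^2" by simp
    define f where "f x = u x - Gf 0 (-(N/2)) 1 ((x-x0)\<bullet>(x-x0))" for x
    have fe: "f x = u x + (N/2) * (dist x x0)^2" for x by (simp add: f_def Gf_def q_dist)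
    have cf: "continuous_on (cball x0 r) f" unfolding fe[abs_def] using cub[OF rR]
      by (intro continuous_intros) auto
    obtain y where yc: "y \<in> cball x0 r" and ymax: "\<forall>z\<in>cball x0 r. f z \<le> f y"
      using continuous_attains_sup[OF compact_cball _ cf] r0 by (metis centre_in_cball empty_iff less_imp_le)
    have "f x0 \<le> f y" using ymax r0 by auto
    hence fy: "u x0 \<le> f y" by (simp add: fe)
    have yb: "y \<in> ball x0 r"
    proof (rule ccontr)
      assume "y \<notin> ball x0 r"
      with yc have ys: "y \<in> sphere x0 r" "dist y x0 = r" by (auto simp: dist_commute)
      have "u y \<le> m r" using mup[OF _ rR ys(1)] r0 by simp
      hence "f y \<le> m r + (N/2)*r^2" using ys by (simp add: fe)
      thus False using fy lt by simp
    qed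
    have yU: "y \<in> U" using yb cbU[OF rR] by auto
    have lm: "local_max_on U (\<lambda>x. u x - Gf 0 (-(N/2)) 1 ((x-x0)\<bullet>(x-x0))) y"
      using local_max_from_ball[OF yb, of f U] ymax unfolding f_def by simp
    have G1c: "G1f 0 (-(N/2)) 1 t = -(N/2)" for t by (simp add: G1f_def)
    have G2c: "G2f 0 (-(N/2)) 1 t = 0" for t by (simp add: G2f_def)
    have "N + u y - v y \<le> 0"
    proof (cases "y = x0")
      case True
      then show ?thesis using sub_test(2)[OF sub _ yU lm] by (simp add: G1c)
    next
      case False
      show ?thesis using sub_test(1)[OF sub _ yU lm False] N0 by (simp add: G1c G2c)
    qed
    thus False using Mb[OF yU] by (simp add: N_def)
  qed

  have comp: "\<forall>x\<in>cball x0 r. u x \<le> u x0 + ((m r - u x0)/r + 3*N*r) * dist x x0 - (N/2) * (dist x x0)^2"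
    if r0: "0<r" and rR: "r \<le> R" for r
  proof (rule ccontr)
    define A where "A = (m r - u x0)/r"
    define a where "a = A + 3*N*r"
    define W where "W x = u x0 + a * dist x x0 - (N/2)*(dist x x0)^2" for x
    assume "\<not> ?thesis"
    then obtain z where zc: "z \<in> cball x0 r" and zW: "u z > W z"
      by (auto simp: W_def a_def A_def not_le)
    define \<theta> where "\<theta> = u z - W z"
    have \<theta>0: "\<theta> > 0" using zW by (simp add: \<theta>_def)
    have Alow: "-(N/2)*r \<le> A" unfolding A_def using r0 lower[OF r0 rR]
      by (simp add: le_divide_eq power2_eq_square algebra_simps)
    have Nr: "N*r > 0" using N0 r0 by simp
    have a_low: "a \<ge> 5/2*N*r" using Alow unfolding a_def by linarith
    have a0: "a > 0" using a_low Nr by linarith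
    have mr: "m r = u x0 + A*r" unfolding A_def using r0 by simp
    have Wge: "W x \<ge> u x0" if "dist x x0 \<le> r" for x
    proof -
      have "N/2 * dist x x0 \<le> N/2 * r" using that N0 by (intro mult_left_mono) auto
      hence "N/2 * dist x x0 \<le> a" using a_low Nr by linarith
      hence "0 \<le> dist x x0 * (a - N/2 * dist x x0)" by simp
      thus ?thesis by (simp add: W_def power2_eq_square algebra_simps)
    qed
    have sph: "u x \<le> W x" if "x \<in> sphere x0 r" for x
    proof -
      have d: "dist x x0 = r" using that by (simp add: dist_commute)
      have "u x \<le> u x0 + A*r" using mup[OF _ rR that] r0 mr by simp
      moreover have "W x = u x0 + A*r + (5/2)*N*r*r" by (simp add: W_def d a_def power2_eq_square algebra_simps)
      moreover have "0 \<le> (5/2)*N*r*r" using Nr r0 by simp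
      ultimately show ?thesis by linarith
    qed
    obtain d where d0: "d > 0" and dc: "\<forall>x'\<in>U. dist x' x0 < d \<longrightarrow> dist (u x') (u x0) < \<theta>/2"
      using cuU x0U \<theta>0 unfolding continuous_on_iff by (meson half_gt_zero)
    define \<delta> where "\<delta> = min d r"
    have \<delta>0: "\<delta> > 0" using d0 r0 by (simp add: \<delta>_def)
    have \<delta>r: "\<delta> \<le> r" by (simp add: \<delta>_def)
    have \<delta>c: "u x < u x0 + \<theta>/2" if "x \<in> U" "dist x x0 < \<delta>" for x
    proof -
      have "dist (u x) (u x0) < \<theta>/2" using dc that by (simp add: \<delta>_def)
      thus ?thesis unfolding dist_real_def by arith
    qed
    define \<epsilon> where "\<epsilon> = min (r^2) (min ((\<theta>/(4*a))^2) (\<delta>^3/(2*a)))"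
    have \<epsilon>0: "\<epsilon> > 0" using r0 \<theta>0 a0 \<delta>0 by (simp add: \<epsilon>_def)
    have \<epsilon>r: "\<epsilon> \<le> r^2" by (simp add: \<epsilon>_def)
    have \<epsilon>s: "a * sqrt \<epsilon> \<le> \<theta>/4"
    proof -
      have "sqrt \<epsilon> \<le> \<theta>/(4*a)" using \<theta>0 a0 by (intro real_le_lsqrt) (auto simp: \<epsilon>_def)
      hence "a * sqrt \<epsilon> \<le> a * (\<theta>/(4*a))" using a0 by (intro mult_left_mono) auto
      thus ?thesis using a0 by simp
    qed
    have \<epsilon>d: "a * \<epsilon> < \<delta>^3"
    proof -
      have "\<epsilon> \<le> \<delta>^3/(2*a)" by (simp add: \<epsilon>_def)
      hence "a * \<epsilon> \<le> a * (\<delta>^3/(2*a))" using a0 by (intro mult_left_mono) auto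
      also have "\<dots> = \<delta>^3/2" using a0 by simp
      also have "\<dots> < \<delta>^3" using \<delta>0 by simp
      finally show ?thesis .
    qed
    define \<Phi> where "\<Phi> x = Gf a (-(N/2)) \<epsilon> ((x-x0)\<bullet>(x-x0))" for x
    have \<Phi>e: "\<Phi> x = a * sqrt((dist x x0)^2 + \<epsilon>) - (N/2)*(dist x x0)^2" for x
      by (simp add: \<Phi>_def Gf_def q_dist)
    have \<Phi>low: "\<Phi> x \<ge> W x - u x0" for x
    proof -
      have "dist x x0 \<le> sqrt((dist x x0)^2 + \<epsilon>)" using \<epsilon>0 by (intro real_le_rsqrt) auto
      hence "a * dist x x0 \<le> a * sqrt((dist x x0)^2 + \<epsilon>)" using a0 by (intro mult_left_mono) auto
      thus ?thesis by (simp add: \<Phi>e W_def)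
    qed
    have \<Phi>up: "\<Phi> x \<le> W x - u x0 + a * sqrt \<epsilon>" for x
    proof -
      have "sqrt((dist x x0)^2 + \<epsilon>) \<le> sqrt((dist x x0)^2) + sqrt \<epsilon>" using \<epsilon>0 by (intro sqrt_add_le_add_sqrt) auto
      hence "sqrt((dist x x0)^2 + \<epsilon>) \<le> dist x x0 + sqrt \<epsilon>" by simp
      hence "a * sqrt((dist x x0)^2 + \<epsilon>) \<le> a * (dist x x0 + sqrt \<epsilon>)" using a0 by (intro mult_left_mono) auto
      thus ?thesis by (simp add: \<Phi>e W_def algebra_simps)
    qed
    define f where "f x = u x - \<Phi> x" for x
    have cf: "continuous_on (cball x0 r) f" unfolding f_def \<Phi>e[abs_def] using cub[OF rR]
      by (intro continuous_intros) auto
    obtain y where yc: "y \<in> cball x0 r" and ymax: "\<forall>z\<in>cball x0 r. f z \<le> f y"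
      using continuous_attains_sup[OF compact_cball _ cf] r0 by (metis centre_in_cball empty_iff less_imp_le)
    have h1: "u z - \<Phi> z \<ge> \<theta> + u x0 - a * sqrt \<epsilon>" using \<Phi>up[of z] unfolding \<theta>_def by linarith
    have "f z \<ge> u x0 + 3*\<theta>/4" using h1 \<epsilon>s unfolding f_def by linarith
    hence fy: "f y \<ge> u x0 + 3*\<theta>/4" using ymax zc by force
    have yU: "y \<in> U" using yc cbU[OF rR] by auto
    have ydr: "dist y x0 \<le> r" using yc by (simp add: dist_commute)
    have yfar: "dist y x0 \<ge> \<delta>"
    proof (rule ccontr)
      assume "\<not> ?thesis"
      hence "u y < u x0 + \<theta>/2" using \<delta>c[OF yU] by simp
      moreover have "f y \<le> u y" using \<Phi>low[of y] Wge[OF ydr] by (simp add: f_def)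
      ultimately show False using fy \<theta>0 by linarith
    qed
    have yb: "y \<in> ball x0 r"
    proof (rule ccontr)
      assume "y \<notin> ball x0 r"
      with yc have ys: "y \<in> sphere x0 r" by (auto simp: dist_commute)
      have "f y \<le> u x0" using \<Phi>low[of y] sph[OF ys] by (simp add: f_def)
      thus False using fy \<theta>0 by linarith
    qed
    have yne: "y \<noteq> x0" using yfar \<delta>0 by auto
    have lm: "local_max_on U (\<lambda>x. u x - Gf a (-(N/2)) \<epsilon> ((x-x0)\<bullet>(x-x0))) y"
      using local_max_from_ball[OF yb, of f U] ymax unfolding f_def \<Phi>_def by simp
    define \<rho> where "\<rho> = dist y x0"
    define s where "s = \<rho>^2 + \<epsilon>"
    have qy: "(y-x0)\<bullet>(y-x0) = \<rho>^2" by (simp add: \<rho>_def q_dist)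
    have \<rho>\<delta>: "\<delta> \<le> \<rho>" using yfar by (simp add: \<rho>_def)
    have \<rho>r: "\<rho> \<le> r" using ydr by (simp add: \<rho>_def)
    have spos: "s > 0" using \<epsilon>0 by (simp add: s_def add_nonneg_pos)
    have sqpos: "sqrt s > 0" using spos by simp
    have sq_le: "sqrt s \<le> 2*r"
    proof (rule real_le_lsqrt)
      show "0 \<le> 2*r" using r0 by simp
      have "\<rho>^2 \<le> r^2" using \<rho>r \<rho>\<delta> \<delta>0 by (intro power_mono) auto
      moreover have "0 \<le> r^2" by simp
      moreover have "(2*r)^2 = 4*r^2" by (simp add: power_mult_distrib)
      ultimately show "s \<le> (2*r)^2" using \<epsilon>r unfolding s_def by linarith
    qed
    have G1pos: "G1f a (-(N/2)) \<epsilon> (\<rho>^2) > 0"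
    proof -
      have "a/(4*r) \<le> a/(2* sqrt s)" using a0 sqpos sq_le r0 by (intro divide_left_mono) auto
      moreover have "5*N/8 \<le> a/(4*r)" using a_low r0 by (simp add: le_divide_eq field_simps)
      ultimately have "5*N/8 \<le> a/(2* sqrt s)" by linarith
      thus ?thesis using N0 by (simp add: G1f_def s_def)
    qed
    have key: "-(4*G2f a (-(N/2)) \<epsilon> (\<rho>^2)*(\<rho>^2) + 2*G1f a (-(N/2)) \<epsilon> (\<rho>^2)) + u y - v y \<le> 0"
      using sub_test(1)[OF sub \<epsilon>0 yU lm yne] G1pos by (simp add: qy)
    have calc: "4*G2f a (-(N/2)) \<epsilon> (\<rho>^2)*(\<rho>^2) + 2*G1f a (-(N/2)) \<epsilon> (\<rho>^2) = a*\<epsilon>/(s* sqrt s) - N"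
    proof -
      have "\<rho>^2 + \<epsilon> = s" by (simp add: s_def)
      then show ?thesis unfolding G1f_def G2f_def using sqpos spos
        by (simp add: field_simps) (simp add: s_def algebra_simps)
    qed
    have big: "a*\<epsilon>/(s* sqrt s) \<ge> 1" using key calc Mb[OF yU] by (simp add: N_def)
    have "\<delta>^3 \<le> s * sqrt s"
    proof -
      have pm: "\<delta>^2 \<le> \<rho>^2" using \<delta>0 by (intro power_mono[OF \<rho>\<delta>]) auto
      have "\<delta>^2 \<le> s" using pm \<epsilon>0 unfolding s_def by linarith
      moreover have "\<delta> \<le> sqrt s" using \<delta>0 \<open>\<delta>^2 \<le> s\<close> by (intro real_le_rsqrt) auto
      ultimately have "\<delta>^2 * \<delta> \<le> s * sqrt s" using \<delta>0 spos by (intro mult_mono) auto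
      thus ?thesis by (simp add: power3_eq_cube power2_eq_square)
    qed
    hence "a*\<epsilon>/(s* sqrt s) < 1" using \<epsilon>d spos sqpos by (simp add: divide_less_eq)
    thus False using big by linarith
  qed
  define g where "g r = S_plus u x0 r" for r
  have gm: "g r = (m r - u x0)/r" for r by (simp add: g_def S_plus_def m_def)
  define K where "K = 3*N"
  have K0: "K > 0" using N0 by (simp add: K_def)
  have mono: "g s \<le> g r + K*r" if s0: "0 < s" and sr: "s < r" and rR: "r \<le> R" for s r
  proof -
    have r0: "0 < r" using s0 sr by simp
    define a where "a = (m r - u x0)/r + 3*N*r"
    have "m s \<le> u x0 + a * s"
    proof (rule mle)
      show "0 \<le> s" "s \<le> R" using s0 sr rR by auto
      fix x assume xs: "x \<in> sphere x0 s"
      hence dx: "dist x x0 = s" by (simp add: dist_commute)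
      have "x \<in> cball x0 r" using xs sr by (simp add: dist_commute)
      hence "u x \<le> u x0 + a * dist x x0 - (N/2) * (dist x x0)^2" using comp[OF r0 rR] by (simp add: a_def)
      hence "u x \<le> u x0 + a * s - (N/2) * s^2" by (simp only: dx)
      moreover have "0 \<le> (N/2) * s^2" using N0 by simp
      ultimately show "u x \<le> u x0 + a * s" by linarith
    qed
    hence "(m s - u x0)/s \<le> a" using s0 by (simp add: divide_le_eq algebra_simps)
    thus ?thesis by (simp add: gm a_def K_def)
  qed
  have low: "g s + K* s \<ge> 0" if s0: "0 < s" and sR: "s \<le> R" for s
  proof -
    have "-(N/2)* s \<le> g s" using lower[OF s0 sR] s0
      by (simp add: gm le_divide_eq power2_eq_square algebra_simps)
    moreover have "0 \<le> N* s" using N0 s0 by simp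
    ultimately show ?thesis by (simp add: K_def)
  qed
  define X where "X = (\<lambda>r. g r + K*r) ` {0<..R}"
  define L where "L = Inf X"
  have Xne: "X \<noteq> {}" using R0 by (auto simp: X_def)
  have Xbdd: "bdd_below X" unfolding X_def bdd_below_def using low by (intro exI[of _ 0]) auto
  have "(g \<longlongrightarrow> L) (at_right 0)"
    unfolding tendsto_iff
  proof (intro allI impI)
    fix e :: real assume e0: "e > 0"
    obtain r1 where r1X: "r1 \<in> {0<..R}" and r1L: "g r1 + K*r1 < L + e"
      using cInf_lessD[OF Xne, of "L + e"] e0 unfolding L_def X_def by auto
    show "\<forall>\<^sub>F s in at_right 0. dist (g s) L < e"
      unfolding eventually_at_right_field
    proof (intro exI[of _ "min r1 (e/K)"] conjI allI impI)
      show "0 < min r1 (e/K)" using r1X e0 K0 by auto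
      fix s :: real assume s0: "0 < s" and sb: "s < min r1 (e/K)"
      have "g s \<le> g r1 + K*r1" using mono[OF s0 _] sb r1X by auto
      hence up: "g s < L + e" using r1L by linarith
      have "s \<in> {0<..R}" using s0 sb r1X by auto
      hence "L \<le> g s + K* s" unfolding L_def X_def using Xbdd[unfolded X_def] by (intro cInf_lower) auto
      moreover have "K* s < e" using sb K0 by (simp add: less_divide_eq mult.commute)
      ultimately show "dist (g s) L < e" using up by (simp add: dist_real_def abs_less_iff)
    qed
  qed
  then show ?thesis unfolding g_def by auto
qed

theorem mainTheorem10:
  fixes U :: "'a::euclidean_space set" and u1 u2 :: "'a \<Rightarrow> real"
  assumes "open U" and "connected U" and "bounded U" and "smooth_boundary U"
    and "continuous_on (closure U) u1" and "continuous_on (closure U) u2"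
    and "visc_sol_S U u1 u2"
    and "x0 \<in> U"
  shows "(\<exists>L::real. ((\<lambda>r. S_plus u1 x0 r) \<longlongrightarrow> L) (at_right 0)) \<and>
         (\<exists>L::real. ((\<lambda>r. S_plus u2 x0 r) \<longlongrightarrow> L) (at_right 0))"
proof -
  have s1: "visc_sub_comp U u1 u2" and s2: "visc_sub_comp U u2 u1"
    using assms(7) unfolding visc_sol_S_def visc_subsol_S_def by auto
  show ?thesis
    using S_limit[OF assms(1,3,5,6) s1 assms(8)] S_limit[OF assms(1,3,6,5) s2 assms(8)] by auto
qed

end
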